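(* Let $\beta=(\beta_{ij})_{i,j\ge 0,\ i+j\le 6}$ be a real sequence such that $\mathcal M(3)(\beta)$ is positive semidefinite, $\mathcal M(2)(\beta)$ is positive definite, and $\operatorname{rank}\mathcal M(3)=\operatorname{card}\mathcal V=7$, where $\mathcal V$ is the algebraic variety of $\mathcal M(3)$. Suppose the columns $\mathcal B_2=\{1,X,Y,X^2,XY,Y^2,X^2Y\}$ form a basis of the column space of $\mathcal M(3)$. Then $\beta$ admits a representing measure if and only if $\mathcal M(3)$ is weakly consistent.
   Context: The moment matrix $\mathcal M(3)(\beta)$ has rows and columns indexed by $1,X,Y,X^2,XY,Y^2,X^3,X^2Y,XY^2,Y^3$ in this order, with entry $\beta_{i+k,j+l}$ in row $X^iY^j$ and column $X^kY^l$; $\mathcal M(2)(\beta)$ is its principal submatrix indexed by monomials of degree $\le 2$. For $p(x,y)=\sum a_{ij}x^iy^j$ of degree $\le 3$, $p(X,Y)=\sum a_{ij}X^iY^j$ is the corresponding linear combination of columns. The algebraic variety is $\mathcal V=\bigcap\{\mathcal Z(p):\deg p\le 3,\ p(X,Y)=\mathbf 0\}$ with $\mathcal Z(p)$ the real zero set of $p$. A representing measure is a positive Borel measure $\mu$ on $\mathbb R^2$ with $\beta_{ij}=\int x^iy^j\,d\mu$ for $i+j\le 6$. $\mathcal M(3)$ is weakly consistent if every polynomial $p$ of degree $\le 3$ vanishing on $\mathcal V$ satisfies $p(X,Y)=\mathbf 0$. *)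

theory Defs
  imports "HOL-Probability.Probability"
begin

text \<open>Monomials of degree at most 3, in the order 1,X,Y,X^2,XY,Y^2,X^3,X^2Y,XY^2,Y^3;
  a monomial X^i Y^j is represented by its exponent pair (i,j).\<close>
definition mons :: "(nat \<times> nat) list" where
  "mons = [(0,0),(1,0),(0,1),(2,0),(1,1),(0,2),(3,0),(2,1),(1,2),(0,3)]"

definition M3 :: "(nat \<Rightarrow> nat \<Rightarrow> real) \<Rightarrow> nat \<Rightarrow> nat \<Rightarrow> real" where
  "M3 \<beta> r c = \<beta> (fst (mons ! r) + fst (mons ! c)) (snd (mons ! r) + snd (mons ! c))"

definition psd :: "nat \<Rightarrow> (nat \<Rightarrow> nat \<Rightarrow> real) \<Rightarrow> bool" where
  "psd n A \<longleftrightarrow> (\<forall>v::nat \<Rightarrow> real. (\<Sum>r<n. \<Sum>c<n. v r * A r c * v c) \<ge> 0)"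

definition pd :: "nat \<Rightarrow> (nat \<Rightarrow> nat \<Rightarrow> real) \<Rightarrow> bool" where
  "pd n A \<longleftrightarrow> (\<forall>v::nat \<Rightarrow> real. (\<exists>r<n. v r \<noteq> 0) \<longrightarrow> (\<Sum>r<n. \<Sum>c<n. v r * A r c * v c) > 0)"

text \<open>M(2) is the principal 6x6 submatrix (indices 0..5).\<close>
definition M2 :: "(nat \<Rightarrow> nat \<Rightarrow> real) \<Rightarrow> nat \<Rightarrow> nat \<Rightarrow> real" where
  "M2 \<beta> = M3 \<beta>"

definition cols_indep :: "nat \<Rightarrow> (nat \<Rightarrow> nat \<Rightarrow> real) \<Rightarrow> nat set \<Rightarrow> bool" where
  "cols_indep n A S \<longleftrightarrow> (\<forall>a::nat \<Rightarrow> real. (\<forall>r<n. (\<Sum>k\<in>S. a k * A r k) = 0) \<longrightarrow> (\<forall>k\<in>S. a k = 0))"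

definition col_in_span :: "nat \<Rightarrow> (nat \<Rightarrow> nat \<Rightarrow> real) \<Rightarrow> nat set \<Rightarrow> nat \<Rightarrow> bool" where
  "col_in_span n A S j \<longleftrightarrow> (\<exists>a::nat \<Rightarrow> real. \<forall>r<n. A r j = (\<Sum>k\<in>S. a k * A r k))"

definition cols_basis :: "nat \<Rightarrow> (nat \<Rightarrow> nat \<Rightarrow> real) \<Rightarrow> nat set \<Rightarrow> bool" where
  "cols_basis n A S \<longleftrightarrow> S \<subseteq> {..<n} \<and> cols_indep n A S \<and> (\<forall>j<n. col_in_span n A S j)"

definition mrank :: "nat \<Rightarrow> (nat \<Rightarrow> nat \<Rightarrow> real) \<Rightarrow> nat" where
  "mrank n A = Max {card S | S. S \<subseteq> {..<n} \<and> cols_indep n A S}"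

definition peval :: "(nat \<Rightarrow> real) \<Rightarrow> real \<times> real \<Rightarrow> real" where
  "peval a p = (\<Sum>k<10. a k * fst p ^ fst (mons ! k) * snd p ^ snd (mons ! k))"

text \<open>p(X,Y) = 0: the corresponding linear combination of columns of M(3) vanishes.\<close>
definition pXY_zero :: "(nat \<Rightarrow> nat \<Rightarrow> real) \<Rightarrow> (nat \<Rightarrow> real) \<Rightarrow> bool" where
  "pXY_zero \<beta> a \<longleftrightarrow> (\<forall>r<10. (\<Sum>k<10. a k * M3 \<beta> r k) = 0)"

definition variety :: "(nat \<Rightarrow> nat \<Rightarrow> real) \<Rightarrow> (real \<times> real) set" where
  "variety \<beta> = (\<Inter> {{p. peval a p = 0} | a. pXY_zero \<beta> a})"

definition weakly_consistent :: "(nat \<Rightarrow> nat \<Rightarrow> real) \<Rightarrow> bool" where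
  "weakly_consistent \<beta> \<longleftrightarrow> (\<forall>a. (\<forall>p\<in>variety \<beta>. peval a p = 0) \<longrightarrow> pXY_zero \<beta> a)"

definition has_rep_measure :: "(nat \<Rightarrow> nat \<Rightarrow> real) \<Rightarrow> bool" where
  "has_rep_measure \<beta> \<longleftrightarrow> (\<exists>\<mu> :: (real \<times> real) measure. sets \<mu> = sets borel \<and>
     (\<forall>i j. i + j \<le> 6 \<longrightarrow> integrable \<mu> (\<lambda>(x,y). x ^ i * y ^ j) \<and>
        (\<integral>(x,y). x ^ i * y ^ j \<partial>\<mu>) = \<beta> i j))"

end

theory Submission
  imports Defs
begin



lemma sum10: "(\<Sum>k<10. f k) = f 0 + f 1 + f 2 + f 3 + f 4 + f 5 + f 6 + f 7 + f 8 + f 9" for f :: "nat \<Rightarrow> real"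
  by (simp add: eval_nat_numeral add.commute add.left_commute)
lemma sum7: "(\<Sum>k<7. f k) = f 0 + f 1 + f 2 + f 3 + f 4 + f 5 + f 6" for f :: "nat \<Rightarrow> real"
  by (simp add: eval_nat_numeral add.commute add.left_commute)
lemma mons_simps: "mons!0 = (0,0)" "mons!1 = (1,0)" "mons!2=(0,1)" "mons!3=(2,0)" "mons!4=(1,1)" "mons!5=(0,2)"
  "mons!6=(3,0)" "mons!7=(2,1)" "mons!8=(1,2)" "mons!9=(0,3)"
  by (simp_all add: mons_def)

definition S0 :: "nat set" where "S0 = {0,1,2,3,4,5,7}"
lemma sumS0: "(\<Sum>k\<in>S0. f k) = f 0 + f 1 + f 2 + f 3 + f 4 + f 5 + f 7" for f :: "nat \<Rightarrow> real"
  by (simp add: S0_def add.commute add.left_commute)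

definition mv :: "nat \<Rightarrow> real \<times> real \<Rightarrow> real" where
  "mv r p = fst p ^ fst (mons!r) * snd p ^ snd (mons!r)"

lemma peval_mv: "peval a p = (\<Sum>k<10. a k * mv k p)"
  by (simp add: peval_def mv_def mult.assoc)

lemma pXY_zero_lin:
  assumes "pXY_zero \<beta> a" "pXY_zero \<beta> b"
  shows "pXY_zero \<beta> (\<lambda>k. c * a k + d * b k)"
  using assms by (simp add: pXY_zero_def algebra_simps sum.distrib sum_distrib_left[symmetric])

lemma pXY_zero_cong:
  assumes "pXY_zero \<beta> a" "\<forall>k<10. b k = a k"
  shows "pXY_zero \<beta> b"
  using assms unfolding pXY_zero_def by simp

lemma pXY_zero_0: "pXY_zero \<beta> (\<lambda>k. 0)" by (simp add: pXY_zero_def)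

locale bsetup =
  fixes \<beta> :: "nat \<Rightarrow> nat \<Rightarrow> real"
  assumes basis: "cols_basis 10 (M3 \<beta>) S0"
begin

lemma indep: "cols_indep 10 (M3 \<beta>) S0" using basis by (simp add: cols_basis_def)

definition coef :: "nat \<Rightarrow> nat \<Rightarrow> real" where
  "coef j = (SOME a. \<forall>r<10. M3 \<beta> r j = (\<Sum>k\<in>S0. a k * M3 \<beta> r k))"

lemma coef: "j < 10 \<Longrightarrow> r < 10 \<Longrightarrow> M3 \<beta> r j = (\<Sum>k\<in>S0. coef j k * M3 \<beta> r k)"
proof -
  assume "j < 10" "r < 10"
  then have "col_in_span 10 (M3 \<beta>) S0 j" using basis by (simp add: cols_basis_def)
  then have "\<exists>a. \<forall>r<10. M3 \<beta> r j = (\<Sum>k\<in>S0. a k * M3 \<beta> r k)" by (simp add: col_in_span_def)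
  from someI_ex[OF this] \<open>r<10\<close> show ?thesis unfolding coef_def by blast
qed

definition kb :: "nat \<Rightarrow> nat \<Rightarrow> real" where
  "kb j k = (if k = j then 1 else if k \<in> S0 then - coef j k else 0)"

lemma kb_ker: assumes "j \<in> {6,8,9}" shows "pXY_zero \<beta> (kb j)"
  unfolding pXY_zero_def
proof (intro allI impI)
  fix r :: nat assume r: "r < 10"
  have "M3 \<beta> r j = (\<Sum>k\<in>S0. coef j k * M3 \<beta> r k)" using coef[OF _ r] assms by auto
  moreover from assms have "j = 6 \<or> j = 8 \<or> j = 9" by auto
  ultimately show "(\<Sum>k<10. kb j k * M3 \<beta> r k) = 0"
    by (elim disjE) (simp_all add: sum10 sumS0 kb_def S0_def)
qed

lemma kernel_span:
  assumes "pXY_zero \<beta> c" "k < 10"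
  shows "c k = c 6 * kb 6 k + c 8 * kb 8 k + c 9 * kb 9 k"
proof -
  define d where "d k = c k - (c 6 * kb 6 k + c 8 * kb 8 k + c 9 * kb 9 k)" for k
  have k1: "pXY_zero \<beta> (\<lambda>k. c 6 * kb 6 k + c 8 * kb 8 k)"
    using pXY_zero_lin[OF kb_ker kb_ker, of 6 8] by simp
  have k2: "pXY_zero \<beta> (\<lambda>k. 1 * (c 6 * kb 6 k + c 8 * kb 8 k) + c 9 * kb 9 k)"
    using pXY_zero_lin[OF k1 kb_ker, of 9 1 "c 9"] by simp
  have "pXY_zero \<beta> d"
    using pXY_zero_lin[OF assms(1) k2, of 1 "-1"] unfolding d_def by (simp add: algebra_simps)
  moreover have "d 6 = 0" "d 8 = 0" "d 9 = 0" by (simp_all add: d_def kb_def S0_def)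
  ultimately have "\<forall>r<10. (\<Sum>k\<in>S0. d k * M3 \<beta> r k) = 0"
    by (simp add: pXY_zero_def sum10 sumS0)
  with indep have "\<forall>k\<in>S0. d k = 0" by (simp add: cols_indep_def)
  with \<open>d 6 = 0\<close> \<open>d 8 = 0\<close> \<open>d 9 = 0\<close> assms(2) have "d k = 0"
    by (auto simp: S0_def eval_nat_numeral less_Suc_eq)
  then show ?thesis by (simp add: d_def)
qed

lemma peval_ker:
  assumes "pXY_zero \<beta> c"
  shows "peval c p = c 6 * peval (kb 6) p + c 8 * peval (kb 8) p + c 9 * peval (kb 9) p"
proof -
  have "peval c p = (\<Sum>k<10. (c 6 * kb 6 k + c 8 * kb 8 k + c 9 * kb 9 k) * mv k p)"
    unfolding peval_mv by (intro sum.cong refl) (metis kernel_span[OF assms] lessThan_iff)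
  also have "\<dots> = c 6 * peval (kb 6) p + c 8 * peval (kb 8) p + c 9 * peval (kb 9) p"
    by (simp add: peval_mv algebra_simps sum.distrib sum_distrib_left)
  finally show ?thesis .
qed

lemma variety_eq:
  "variety \<beta> = {p. peval (kb 6) p = 0 \<and> peval (kb 8) p = 0 \<and> peval (kb 9) p = 0}"
proof
  show "variety \<beta> \<subseteq> {p. peval (kb 6) p = 0 \<and> peval (kb 8) p = 0 \<and> peval (kb 9) p = 0}"
    unfolding variety_def using kb_ker by blast
  show "{p. peval (kb 6) p = 0 \<and> peval (kb 8) p = 0 \<and> peval (kb 9) p = 0} \<subseteq> variety \<beta>"
    unfolding variety_def using peval_ker by auto
qed

end



lemma mons_deg: "r < 10 \<Longrightarrow> fst (mons!r) + snd (mons!r) \<le> 3"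
  by (auto simp: eval_nat_numeral less_Suc_eq mons_def)

lemma mv_mult: "mv r p * mv s p = fst p ^ (fst (mons!r) + fst (mons!s)) * snd p ^ (snd (mons!r) + snd (mons!s))"
  by (simp add: mv_def power_add algebra_simps)

lemma M3_sym: "M3 \<beta> r s = M3 \<beta> s r"
  by (simp add: M3_def add.commute)

context
  fixes \<beta> :: "nat \<Rightarrow> nat \<Rightarrow> real" and \<mu> :: "(real \<times> real) measure"
  assumes mom: "\<forall>i j. i + j \<le> 6 \<longrightarrow> integrable \<mu> (\<lambda>(x,y). x ^ i * y ^ j) \<and>
        (\<integral>(x,y). x ^ i * y ^ j \<partial>\<mu>) = \<beta> i j"
begin

lemma int_mm: assumes "r < 10" "s < 10"
  shows "integrable \<mu> (\<lambda>p. mv r p * mv s p)" "(\<integral>p. mv r p * mv s p \<partial>\<mu>) = M3 \<beta> r s"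
proof -
  have d: "(fst (mons!r) + fst (mons!s)) + (snd (mons!r) + snd (mons!s)) \<le> 6"
    using mons_deg[OF assms(1)] mons_deg[OF assms(2)] by linarith
  have e: "(\<lambda>p. mv r p * mv s p) = (\<lambda>(x,y). x ^ (fst (mons!r) + fst (mons!s)) * y ^ (snd (mons!r) + snd (mons!s)))"
    by (simp add: mv_mult case_prod_unfold)
  show "integrable \<mu> (\<lambda>p. mv r p * mv s p)" using mom d unfolding e by blast
  show "(\<integral>p. mv r p * mv s p \<partial>\<mu>) = M3 \<beta> r s" using mom d unfolding e M3_def by blast
qed

lemma int_pm: assumes "r < 10"
  shows "integrable \<mu> (\<lambda>p. peval a p * mv r p)" "(\<integral>p. peval a p * mv r p \<partial>\<mu>) = (\<Sum>k<10. a k * M3 \<beta> r k)"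
proof -
  have e: "(\<lambda>p. peval a p * mv r p) = (\<lambda>p. \<Sum>k<10. a k * (mv k p * mv r p))"
    by (rule ext) (simp add: peval_mv sum_distrib_right mult.assoc)
  have i: "\<And>k. k \<in> {..<10} \<Longrightarrow> integrable \<mu> (\<lambda>p. a k * (mv k p * mv r p))"
    using int_mm assms by auto
  show "integrable \<mu> (\<lambda>p. peval a p * mv r p)" unfolding e using i by auto
  have "(\<integral>p. peval a p * mv r p \<partial>\<mu>) = (\<Sum>k<10. (\<integral>p. a k * (mv k p * mv r p) \<partial>\<mu>))"
    unfolding e by (rule Bochner_Integration.integral_sum[OF i])
  also have "\<dots> = (\<Sum>k<10. a k * M3 \<beta> r k)"
    using int_mm assms by (intro sum.cong refl) (simp add: M3_sym)
  finally show "(\<integral>p. peval a p * mv r p \<partial>\<mu>) = (\<Sum>k<10. a k * M3 \<beta> r k)" .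
qed

lemma ker_AE: assumes "pXY_zero \<beta> b" shows "AE p in \<mu>. peval b p = 0"
proof -
  have e: "(\<lambda>p. (peval b p)^2) = (\<lambda>p. \<Sum>r<10. b r * (peval b p * mv r p))"
    by (rule ext) (simp add: power2_eq_square peval_mv[of b] sum_distrib_left sum_distrib_right algebra_simps)
  have i: "\<And>r. r \<in> {..<10} \<Longrightarrow> integrable \<mu> (\<lambda>p. b r * (peval b p * mv r p))"
    using int_pm by auto
  have int: "integrable \<mu> (\<lambda>p. (peval b p)^2)" unfolding e using i by auto
  have "(\<integral>p. (peval b p)^2 \<partial>\<mu>) = (\<Sum>r<10. (\<integral>p. b r * (peval b p * mv r p) \<partial>\<mu>))"
    unfolding e by (rule Bochner_Integration.integral_sum[OF i])
  also have "\<dots> = (\<Sum>r<10. b r * (\<Sum>k<10. b k * M3 \<beta> r k))"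
    using int_pm by (intro sum.cong refl) simp
  also have "\<dots> = 0" using assms by (simp add: pXY_zero_def)
  finally have "(\<integral>p. (peval b p)^2 \<partial>\<mu>) = 0" .
  then have "AE p in \<mu>. (peval b p)^2 = 0"
    using integral_nonneg_eq_0_iff_AE[OF int] by simp
  then show ?thesis by simp
qed

end

lemma (in bsetup) kb6: "pXY_zero \<beta> (kb 6)" by (rule kb_ker) simp
lemma (in bsetup) kb8: "pXY_zero \<beta> (kb 8)" by (rule kb_ker) simp
lemma (in bsetup) kb9: "pXY_zero \<beta> (kb 9)" by (rule kb_ker) simp

lemma (in bsetup) rep_imp_wc:
  assumes "has_rep_measure \<beta>" shows "weakly_consistent \<beta>"
proof -
  obtain \<mu> :: "(real \<times> real) measure" where mom: "\<forall>i j. i + j \<le> 6 \<longrightarrow> integrable \<mu> (\<lambda>(x,y). x ^ i * y ^ j) \<and>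
        (\<integral>(x,y). x ^ i * y ^ j \<partial>\<mu>) = \<beta> i j"
    using assms unfolding has_rep_measure_def by blast
  have AEV: "AE p in \<mu>. p \<in> variety \<beta>"
    using ker_AE[OF mom kb6] ker_AE[OF mom kb8] ker_AE[OF mom kb9]
    unfolding variety_eq by eventually_elim auto
  show ?thesis unfolding weakly_consistent_def pXY_zero_def
  proof (intro allI impI)
    fix a r assume a: "\<forall>p\<in>variety \<beta>. peval a p = 0" and r: "(r::nat) < 10"
    have "(\<Sum>k<10. a k * M3 \<beta> r k) = (\<integral>p. peval a p * mv r p \<partial>\<mu>)"
      using int_pm[OF mom r] by simp
    also have "\<dots> = (\<integral>p. 0 \<partial>\<mu>)"
      using AEV a int_pm(1)[OF mom r]
      by (intro integral_cong_AE) (auto elim!: eventually_mono)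
    finally show "(\<Sum>k<10. a k * M3 \<beta> r k) = 0" by simp
  qed
qed




lemma peval_lin: "peval (\<lambda>m. a m - (\<Sum>j\<in>J. c j * l j m)) p = peval a p - (\<Sum>j\<in>J. c j * peval (l j) p)"
  by (simp add: peval_mv algebra_simps sum_subtractf sum_distrib_left sum_distrib_right sum.swap[of _ J])

locale wsetup = bsetup +
  assumes wc: "weakly_consistent \<beta>" and finV: "finite (variety \<beta>)" and cardV: "card (variety \<beta>) = 7"
begin

definition pt :: "nat \<Rightarrow> real \<times> real" where "pt = (SOME h. bij_betw h {..<7::nat} (variety \<beta>))"

lemma pt_bij: "bij_betw pt {..<7::nat} (variety \<beta>)"
proof -
  have "\<exists>h. bij_betw h {..<7::nat} (variety \<beta>)"
    using ex_bij_betw_nat_finite[OF finV] cardV by (simp add: atLeast0LessThan)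
  then show ?thesis unfolding pt_def by (rule someI_ex)
qed

lemma pt_in: "j < 7 \<Longrightarrow> pt j \<in> variety \<beta>" using pt_bij by (auto simp: bij_betw_def)
lemma pt_inj: "i < 7 \<Longrightarrow> j < 7 \<Longrightarrow> pt i = pt j \<Longrightarrow> i = j"
  using pt_bij by (auto simp: bij_betw_def inj_on_def)
lemma pt_surj: "p \<in> variety \<beta> \<Longrightarrow> \<exists>j<7. p = pt j"
  using pt_bij by (auto simp: bij_betw_def)

lemma wc_apply: assumes "\<forall>j<7. peval a (pt j) = 0" shows "pXY_zero \<beta> a"
proof -
  have "\<forall>p\<in>variety \<beta>. peval a p = 0" using assms pt_surj by blast
  then show ?thesis using wc by (simp add: weakly_consistent_def)
qed

lemma ker_vanish: "pXY_zero \<beta> b \<Longrightarrow> j < 7 \<Longrightarrow> peval b (pt j) = 0"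
  using pt_in unfolding variety_def by blast

definition gg :: "nat \<Rightarrow> 7" where "gg = (SOME g. bij_betw g {..<7::nat} (UNIV::7 set))"
lemma gg_bij: "bij_betw gg {..<7} (UNIV::7 set)"
proof -
  have "\<exists>g. bij_betw g {..<7::nat} (UNIV::7 set)" by (rule finite_same_card_bij) auto
  then show ?thesis unfolding gg_def by (rule someI_ex)
qed
definition hh :: "7 \<Rightarrow> nat" where "hh = the_inv_into {..<7} gg"
lemma hh_lt: "hh t < 7"
  using gg_bij unfolding hh_def bij_betw_def by (metis UNIV_I lessThan_iff the_inv_into_into subsetI)
lemma gg_hh: "gg (hh t) = t"
  using gg_bij unfolding hh_def bij_betw_def by (simp add: f_the_inv_into_f)
lemma hh_gg: "i < 7 \<Longrightarrow> hh (gg i) = i"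
  using gg_bij unfolding hh_def bij_betw_def by (simp add: the_inv_into_f_f)

definition cv :: "real^7 \<Rightarrow> nat \<Rightarrow> real" where
  "cv c k = (if k < 6 then c $ (gg k) else if k = 7 then c $ (gg 6) else 0)"

definition EE :: "real^7 \<Rightarrow> real^7" where
  "EE c = (\<chi> t. peval (cv c) (pt (hh t)))"

lemma EE_lin: "linear EE"
proof (rule linearI)
  fix x y :: "real^7" and r :: real
  show "EE (x + y) = EE x + EE y"
    by (simp add: EE_def vec_eq_iff peval_mv sum10 cv_def algebra_simps)
  show "EE (r *\<^sub>R x) = r *\<^sub>R EE x"
    by (simp add: EE_def vec_eq_iff peval_mv sum10 cv_def algebra_simps)
qed

lemma EE_inj: "inj EE"
proof -
  have "c = 0" if "EE c = 0" for c
  proof -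
    have "\<forall>j<7. peval (cv c) (pt j) = 0"
    proof (intro allI impI)
      fix j :: nat assume "j < 7"
      have "EE c $ gg j = 0" using that by simp
      then show "peval (cv c) (pt j) = 0" using hh_gg[OF \<open>j<7\<close>] by (simp add: EE_def)
    qed
    then have z: "pXY_zero \<beta> (cv c)" by (rule wc_apply)
    have "cv c k = 0" if "k < 10" for k
      using kernel_span[OF z that] by (simp add: cv_def)
    have "c $ (gg i) = 0" if "i < 7" for i
    proof (cases "i < 6")
      case True then show ?thesis using \<open>\<And>k. k < 10 \<Longrightarrow> cv c k = 0\<close>[of i] by (simp add: cv_def)
    next
      case False then have "i = 6" using that by simp
      then show ?thesis using \<open>\<And>k. k < 10 \<Longrightarrow> cv c k = 0\<close>[of 7] by (simp add: cv_def)
    qed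
    then show "c = 0" by (metis vec_eq_iff zero_index gg_hh hh_lt)
  qed
  then show ?thesis using EE_lin by (simp add: linear_injective_0)
qed

lemma EE_surj: "surj EE"
  using linear_injective_imp_surjective[OF EE_lin EE_inj] by simp

definition lag :: "nat \<Rightarrow> nat \<Rightarrow> real" where
  "lag k = cv (SOME c. EE c = (\<chi> t. if hh t = k then 1 else 0))"

lemma lag_eval: assumes "j < 7" shows "peval (lag k) (pt j) = (if j = k then 1 else 0)"
proof -
  obtain c where c: "EE c = (\<chi> t. if hh t = k then 1 else 0)" using EE_surj by (metis surjD)
  let ?c = "SOME c. EE c = (\<chi> t. if hh t = k then 1 else 0)"
  have "EE ?c = (\<chi> t. if hh t = k then 1 else 0)" using c by (rule someI)
  then have "EE ?c $ gg j = (if hh (gg j) = k then 1 else 0)" by simp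
  then show ?thesis using hh_gg[OF assms] by (simp add: EE_def lag_def)
qed

lemma lag_supp: "k \<notin> S0 \<Longrightarrow> lag i k = 0"
  by (simp add: lag_def cv_def S0_def)

end



lemma delta_sum: "r < (n::nat) \<Longrightarrow> (\<Sum>k<n. (if k = r then 1 else 0) * f k) = (f r :: real)"
proof -
  assume "r < n"
  have "(\<Sum>k<n. (if k = r then 1 else 0) * f k) = (\<Sum>k<n. if k = r then f k else 0)"
    by (rule sum.cong) auto
  also have "\<dots> = f r" using \<open>r < n\<close> by (subst sum.delta) auto
  finally show ?thesis .
qed

lemma mons_ex: assumes "u + v \<le> 3" shows "\<exists>r<10. mons!r = (u,v)"
proof -
  have "u = 0 \<or> u = 1 \<or> u = 2 \<or> u = 3" "v = 0 \<or> v = 1 \<or> v = 2 \<or> v = 3" using assms by arith+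
  then have "(u,v) \<in> set mons" using assms
    by (elim disjE) (simp_all add: mons_def)
  moreover have "length mons = 10" by (simp add: mons_def)
  ultimately show ?thesis by (metis in_set_conv_nth)
qed

context wsetup begin

lemma ker_decomp: "pXY_zero \<beta> (\<lambda>m. a m - (\<Sum>j<7. peval a (pt j) * lag j m))"
proof (rule wc_apply, intro allI impI)
  fix i :: nat assume i: "i < 7"
  have "(\<Sum>j<7. peval a (pt j) * peval (lag j) (pt i)) = peval a (pt i)"
    using i by (simp add: lag_eval if_distrib sum.delta cong: if_cong)
  then show "peval (\<lambda>m. a m - (\<Sum>j<7. peval a (pt j) * lag j m)) (pt i) = 0"
    by (simp add: peval_lin)
qed

definition LL :: "(nat \<Rightarrow> real) \<Rightarrow> real" where
  "LL a = (\<Sum>k<10. a k * \<beta> (fst (mons!k)) (snd (mons!k)))"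

lemma LL_ker: "pXY_zero \<beta> b \<Longrightarrow> LL b = 0"
  unfolding pXY_zero_def LL_def by (drule spec[of _ 0]) (simp add: M3_def mons_simps)

definition w :: "nat \<Rightarrow> real" where "w j = LL (lag j)"

lemma LL_decomp: "LL a = (\<Sum>j<7. peval a (pt j) * w j)"
proof -
  have "0 = LL (\<lambda>m. a m - (\<Sum>j<7. peval a (pt j) * lag j m))" using LL_ker[OF ker_decomp] by simp
  also have "\<dots> = LL a - (\<Sum>j<7. peval a (pt j) * w j)"
    by (simp add: LL_def w_def algebra_simps sum_subtractf sum_distrib_left sum_distrib_right sum.swap[of _ "{..<7}"])
  finally show ?thesis by simp
qed

definition D :: "nat \<Rightarrow> nat \<Rightarrow> real" where
  "D i j = \<beta> i j - (\<Sum>l<7. w l * (fst (pt l) ^ i * snd (pt l) ^ j))"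

lemma D3: assumes "r < 10" shows "D (fst (mons!r)) (snd (mons!r)) = 0"
proof -
  have "LL (\<lambda>k. if k = r then 1 else 0) = \<beta> (fst (mons!r)) (snd (mons!r))"
    using assms by (simp add: LL_def delta_sum)
  moreover have "peval (\<lambda>k. if k = r then 1 else 0) p = mv r p" for p
    using assms by (simp add: peval_mv delta_sum)
  ultimately show ?thesis using LL_decomp[of "\<lambda>k. if k = r then 1 else 0"]
    by (simp add: D_def mv_def mult.commute)
qed

lemma D_low: "i + j \<le> 3 \<Longrightarrow> D i j = 0"
  using mons_ex D3 by (metis fst_conv snd_conv)

lemma K: assumes b: "pXY_zero \<beta> b" and uv: "u + v \<le> 3"
  shows "(\<Sum>k<10. b k * D (fst (mons!k) + u) (snd (mons!k) + v)) = 0"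
proof -
  obtain r where r: "r < 10" "mons!r = (u,v)" using mons_ex[OF uv] by blast
  have 1: "(\<Sum>k<10. b k * \<beta> (fst (mons!k) + u) (snd (mons!k) + v)) = 0"
  proof -
    have "(\<Sum>k<10. b k * M3 \<beta> r k) = 0" using b r(1) unfolding pXY_zero_def by blast
    then show ?thesis unfolding M3_def r(2) by (simp add: add.commute)
  qed
  have 2: "(\<Sum>k<10. b k * (\<Sum>l<7. w l * (fst (pt l) ^ (fst (mons!k) + u) * snd (pt l) ^ (snd (mons!k) + v))))
     = (\<Sum>l<7. w l * fst (pt l) ^ u * snd (pt l) ^ v * peval b (pt l))"
    by (simp add: peval_mv mv_def power_add sum_distrib_left sum_distrib_right sum.swap[of _ "{..<7}"] algebra_simps)
  have 3: "(\<Sum>l<7. w l * fst (pt l) ^ u * snd (pt l) ^ v * peval b (pt l)) = 0"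
    using ker_vanish[OF b] by simp
  show ?thesis using 1 2 3 by (simp add: D_def right_diff_distrib sum_subtractf)
qed

end



lemma mons_Suc0: "mons ! Suc 0 = (1,0)" by (simp add: mons_def)

context wsetup begin

lemma rels:
  assumes IH: "\<And>i j. i + j < u + v + 3 \<Longrightarrow> D i j = 0" and uv: "u + v \<le> 3"
  shows "D (u+3) v = coef 6 7 * D (u+2) (v+1)"
    "D (u+1) (v+2) = coef 8 7 * D (u+2) (v+1)"
    "D u (v+3) = coef 9 7 * D (u+2) (v+1)"
proof -
  show "D (u+3) v = coef 6 7 * D (u+2) (v+1)"
    using K[OF kb6 uv] by (simp add: sum10 kb_def S0_def mons_simps mons_Suc0 IH add.commute)
  show "D (u+1) (v+2) = coef 8 7 * D (u+2) (v+1)"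
    using K[OF kb8 uv] by (simp add: sum10 kb_def S0_def mons_simps mons_Suc0 IH add.commute)
  show "D u (v+3) = coef 9 7 * D (u+2) (v+1)"
    using K[OF kb9 uv] by (simp add: sum10 kb_def S0_def mons_simps mons_Suc0 IH add.commute)
qed


lemma alg:
  fixes x y z A B G :: real
  assumes "y = A * x" "x = B * y" "z = B * x" "z = G * y" "\<not> (A * B = 1 \<and> B = G * A)"
  shows "x = 0"
proof (rule ccontr)
  assume ne: "x \<noteq> 0"
  have "x * (A * B - 1) = 0" using assms(1,2) by algebra
  then have e1: "A * B = 1" using ne by simp
  have "x * (B - G * A) = 0" using assms(1,3,4) by algebra
  then have e2: "B = G * A" using ne by simp
  show False using assms(5) e1 e2 by simp
qed

abbreviation "nondeg \<equiv> \<not> (coef 6 7 * coef 8 7 = 1 \<and> coef 8 7 = coef 9 7 * coef 6 7)"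

lemma deg4:
  assumes IH: "\<And>i j. i + j < 4 \<Longrightarrow> D i j = 0" and nd: nondeg
  shows "D 0 4 = 0 \<and> D 1 3 = 0 \<and> D 2 2 = 0 \<and> D 3 1 = 0 \<and> D 4 0 = 0"
proof -
  have IH0: "\<And>i j. i + j < 0 + 1 + 3 \<Longrightarrow> D i j = 0" using IH by simp
  have h0: "0 + 1 \<le> (3::nat)" by simp
  note r0 = rels[of 0 1, OF IH0 h0]
  have IH1: "\<And>i j. i + j < 1 + 0 + 3 \<Longrightarrow> D i j = 0" using IH by simp
  have h1: "1 + 0 \<le> (3::nat)" by simp
  note r1 = rels[of 1 0, OF IH1 h1]
  have f1: "D 3 1 = coef 6 7 * D 2 2" using r0(1) by (simp add: eval_nat_numeral)
  have f2: "D 2 2 = coef 8 7 * D 3 1" using r1(2) by (simp add: eval_nat_numeral)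
  have f3: "D 1 3 = coef 8 7 * D 2 2" using r0(2) by (simp add: eval_nat_numeral)
  have f4: "D 1 3 = coef 9 7 * D 3 1" using r1(3) by (simp add: eval_nat_numeral)
  have d2: "D 2 2 = 0" by (rule alg[OF f1 f2 f3 f4 nd])
  show ?thesis using d2 r0 r1 by (simp add: eval_nat_numeral)
qed

lemma deg5:
  assumes IH: "\<And>i j. i + j < 5 \<Longrightarrow> D i j = 0" and nd: nondeg
  shows "D 0 5 = 0 \<and> D 1 4 = 0 \<and> D 2 3 = 0 \<and> D 3 2 = 0 \<and> D 4 1 = 0 \<and> D 5 0 = 0"
proof -
  have IH0: "\<And>i j. i + j < 0 + 2 + 3 \<Longrightarrow> D i j = 0" using IH by simp
  have h0: "0 + 2 \<le> (3::nat)" by simp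
  note r0 = rels[of 0 2, OF IH0 h0]
  have IH1: "\<And>i j. i + j < 1 + 1 + 3 \<Longrightarrow> D i j = 0" using IH by simp
  have h1: "1 + 1 \<le> (3::nat)" by simp
  note r1 = rels[of 1 1, OF IH1 h1]
  have IH2: "\<And>i j. i + j < 2 + 0 + 3 \<Longrightarrow> D i j = 0" using IH by simp
  have h2: "2 + 0 \<le> (3::nat)" by simp
  note r2 = rels[of 2 0, OF IH2 h2]
  have f1: "D 3 2 = coef 6 7 * D 2 3" using r0(1) by (simp add: eval_nat_numeral)
  have f2: "D 2 3 = coef 8 7 * D 3 2" using r1(2) by (simp add: eval_nat_numeral)
  have f3: "D 1 4 = coef 8 7 * D 2 3" using r0(2) by (simp add: eval_nat_numeral)
  have f4: "D 1 4 = coef 9 7 * D 3 2" using r1(3) by (simp add: eval_nat_numeral)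
  have d2: "D 2 3 = 0" by (rule alg[OF f1 f2 f3 f4 nd])
  show ?thesis using d2 r0 r1 r2 by (simp add: eval_nat_numeral)
qed

lemma deg6:
  assumes IH: "\<And>i j. i + j < 6 \<Longrightarrow> D i j = 0" and nd: nondeg
  shows "D 0 6 = 0 \<and> D 1 5 = 0 \<and> D 2 4 = 0 \<and> D 3 3 = 0 \<and> D 4 2 = 0 \<and> D 5 1 = 0 \<and> D 6 0 = 0"
proof -
  have IH0: "\<And>i j. i + j < 0 + 3 + 3 \<Longrightarrow> D i j = 0" using IH by simp
  have h0: "0 + 3 \<le> (3::nat)" by simp
  note r0 = rels[of 0 3, OF IH0 h0]
  have IH1: "\<And>i j. i + j < 1 + 2 + 3 \<Longrightarrow> D i j = 0" using IH by simp
  have h1: "1 + 2 \<le> (3::nat)" by simp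
  note r1 = rels[of 1 2, OF IH1 h1]
  have IH2: "\<And>i j. i + j < 2 + 1 + 3 \<Longrightarrow> D i j = 0" using IH by simp
  have h2: "2 + 1 \<le> (3::nat)" by simp
  note r2 = rels[of 2 1, OF IH2 h2]
  have IH3: "\<And>i j. i + j < 3 + 0 + 3 \<Longrightarrow> D i j = 0" using IH by simp
  have h3: "3 + 0 \<le> (3::nat)" by simp
  note r3 = rels[of 3 0, OF IH3 h3]
  have f1: "D 3 3 = coef 6 7 * D 2 4" using r0(1) by (simp add: eval_nat_numeral)
  have f2: "D 2 4 = coef 8 7 * D 3 3" using r1(2) by (simp add: eval_nat_numeral)
  have f3: "D 1 5 = coef 8 7 * D 2 4" using r0(2) by (simp add: eval_nat_numeral)
  have f4: "D 1 5 = coef 9 7 * D 3 3" using r1(3) by (simp add: eval_nat_numeral)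
  have d2: "D 2 4 = 0" by (rule alg[OF f1 f2 f3 f4 nd])
  show ?thesis using d2 r0 r1 r2 r3 by (simp add: eval_nat_numeral)
qed

lemma le6_cases: "(k::nat) \<le> 6 \<Longrightarrow> k = 0 \<or> k = 1 \<or> k = 2 \<or> k = 3 \<or> k = 4 \<or> k = 5 \<or> k = 6"
  by arith

lemma D_all:
  assumes nd: nondeg
  shows "i + j \<le> 6 \<Longrightarrow> D i j = 0"
proof (induction "i + j" arbitrary: i j rule: less_induct)
  case less
  show ?case
  proof (cases "i + j \<le> 3")
    case True then show ?thesis by (rule D_low)
  next
    case False
    have IH: "\<And>a b. a + b < i + j \<Longrightarrow> D a b = 0" using less by simp
    have ji: "j = (i + j) - i" by simp
    have i6: "i \<le> 6" using less.prems by simp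
    have "i + j = 4 \<or> i + j = 5 \<or> i + j = 6" using False less.prems by arith
    then show ?thesis
    proof (elim disjE)
      assume n: "i + j = 4"
      note z = deg4[OF IH[unfolded n] nd]
      show ?thesis using le6_cases[OF i6] n ji z by (elim disjE) simp_all
    next
      assume n: "i + j = 5"
      note z = deg5[OF IH[unfolded n] nd]
      show ?thesis using le6_cases[OF i6] n ji z by (elim disjE) simp_all
    next
      assume n: "i + j = 6"
      note z = deg6[OF IH[unfolded n] nd]
      show ?thesis using le6_cases[OF i6] n ji z by (elim disjE) simp_all
    qed
  qed
qed

end



context wsetup begin

lemma beta_eval: assumes nd: nondeg and ij: "i + j \<le> 6"
  shows "\<beta> i j = (\<Sum>l<7. w l * (fst (pt l) ^ i * snd (pt l) ^ j))"
  using D_all[OF nd ij] by (simp add: D_def)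

lemma M3_eval: assumes nd: nondeg and rc: "r < 10" "c < 10"
  shows "M3 \<beta> r c = (\<Sum>l<7. w l * (mv r (pt l) * mv c (pt l)))"
proof -
  have "fst (mons!r) + fst (mons!c) + (snd (mons!r) + snd (mons!c)) \<le> 6"
    using mons_deg[OF rc(1)] mons_deg[OF rc(2)] by linarith
  then show ?thesis unfolding M3_def by (simp add: beta_eval[OF nd] mv_mult)
qed

lemma w_nonneg: assumes nd: nondeg and psd: "psd 10 (M3 \<beta>)" and k: "k < 7"
  shows "0 \<le> w k"
proof -
  have "0 \<le> (\<Sum>r<10. \<Sum>c<10. lag k r * M3 \<beta> r c * lag k c)"
    using psd unfolding psd_def by blast
  also have "(\<Sum>r<10. \<Sum>c<10. lag k r * M3 \<beta> r c * lag k c)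
      = (\<Sum>r<10. \<Sum>c<10. lag k r * (\<Sum>l<7. w l * (mv r (pt l) * mv c (pt l))) * lag k c)"
    by (intro sum.cong refl) (simp add: M3_eval[OF nd])
  also have "\<dots> = (\<Sum>l<7. w l * (peval (lag k) (pt l) * peval (lag k) (pt l)))"
    by (simp add: peval_mv sum_distrib_left sum_distrib_right algebra_simps sum.swap[of _ "{..<7}"])
  also have "\<dots> = (\<Sum>l<7. (if l = k then w l else 0))"
    by (intro sum.cong refl) (simp add: lag_eval)
  also have "\<dots> = w k" using k by (subst sum.delta) auto
  finally show ?thesis .
qed

definition wp :: "real \<times> real \<Rightarrow> real" where "wp p = w (the_inv_into {..<7} pt p)"

lemma wp_pt: "l < 7 \<Longrightarrow> wp (pt l) = w l"
  using pt_bij unfolding wp_def bij_betw_def by (simp add: the_inv_into_f_f)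

lemma sum_V: "(\<Sum>p\<in>variety \<beta>. f p) = (\<Sum>l<7. f (pt l))"
  using sum.reindex_bij_betw[OF pt_bij, of f] by simp

definition mu :: "(real \<times> real) measure" where
  "mu = distr (point_measure (variety \<beta>) (\<lambda>p. ennreal (wp p))) borel (\<lambda>p. p)"

lemma rep: assumes nd: nondeg and psd: "psd 10 (M3 \<beta>)" shows "has_rep_measure \<beta>"
  unfolding has_rep_measure_def
proof (intro exI[of _ mu] conjI allI impI)
  show "sets mu = sets borel" by (simp add: mu_def)
  fix i j :: nat assume ij: "i + j \<le> 6"
  have meas: "(\<lambda>p. p) \<in> measurable (point_measure (variety \<beta>) (\<lambda>p. ennreal (wp p))) borel" by simp
  have fm: "(\<lambda>(x::real, y::real). x ^ i * y ^ j) \<in> borel_measurable borel"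
    unfolding case_prod_unfold by (intro borel_measurable_continuous_onI continuous_intros)
  have wpos: "\<And>p. p \<in> variety \<beta> \<Longrightarrow> 0 \<le> wp p"
    using pt_surj wp_pt w_nonneg[OF nd psd] by force
  show "integrable mu (\<lambda>(x, y). x ^ i * y ^ j)"
    unfolding mu_def using integrable_distr_eq[OF meas fm] integrable_point_measure_finite[OF finV] by simp
  have "(\<integral>(x, y). x ^ i * y ^ j \<partial>mu) = (\<integral>p. (case p of (x, y) \<Rightarrow> x ^ i * y ^ j) \<partial>(point_measure (variety \<beta>) (\<lambda>p. ennreal (wp p))))"
    unfolding mu_def by (rule integral_distr[OF meas fm])
  also have "\<dots> = (\<Sum>p\<in>variety \<beta>. wp p *\<^sub>R (case p of (x, y) \<Rightarrow> x ^ i * y ^ j))"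
    by (rule lebesgue_integral_point_measure_finite[OF finV wpos])
  also have "\<dots> = (\<Sum>l<7. w l * (fst (pt l) ^ i * snd (pt l) ^ j))"
    by (simp add: sum_V wp_pt case_prod_unfold)
  also have "\<dots> = \<beta> i j" using beta_eval[OF nd ij] by simp
  finally show "(\<integral>(x, y). x ^ i * y ^ j \<partial>mu) = \<beta> i j" .
qed

end




lemma exists_other:
  fixes f :: "nat \<Rightarrow> real"
  assumes "finite S" "a \<in> S" "(\<Sum>j\<in>S. f j) = 0" "f a \<noteq> 0"
  shows "\<exists>j\<in>S. j \<noteq> a \<and> f j \<noteq> 0"
proof (rule ccontr)
  assume "\<not> ?thesis"
  then have "(\<Sum>j\<in>S - {a}. f j) = 0" by (intro sum.neutral) auto
  then have "(\<Sum>j\<in>S. f j) = f a" using sum.remove[OF assms(1,2), of f] by simp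
  with assms show False by simp
qed

lemma quad_zero:
  fixes e0 e1 e2 a b c :: real
  assumes "e0 + e1 * a + e2 * a^2 = 0" "e0 + e1 * b + e2 * b^2 = 0" "e0 + e1 * c + e2 * c^2 = 0"
    and "a \<noteq> b" "a \<noteq> c" "b \<noteq> c"
  shows "e0 = 0 \<and> e1 = 0 \<and> e2 = 0"
proof -
  have "(a - b) * (e1 + e2 * (a + b)) = 0" using assms(1,2) by algebra
  then have 1: "e1 + e2 * (a + b) = 0" using assms(4) by simp
  have "(a - c) * (e1 + e2 * (a + c)) = 0" using assms(1,3) by algebra
  then have 2: "e1 + e2 * (a + c) = 0" using assms(5) by simp
  have "e2 * (b - c) = 0" using 1 2 by algebra
  then have e2: "e2 = 0" using assms(6) by simp
  then have "e1 = 0" using 1 by simp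
  then show ?thesis using e2 assms(1) by simp
qed

definition TT :: "real \<Rightarrow> (nat \<Rightarrow> real) \<Rightarrow> real" where
  "TT t a = a 6 * t^3 + a 7 * t^2 + a 8 * t + a 9"

lemma peval_line:
  "peval a (t * s + c, s) =
     (a 0 + a 1 * c + a 3 * c^2 + a 6 * c^3)
   + (a 1 * t + a 2 + 2 * a 3 * t * c + a 4 * c + 3 * a 6 * t * c^2 + a 7 * c^2) * s
   + (a 3 * t^2 + a 4 * t + a 5 + 3 * a 6 * t^2 * c + 2 * a 7 * t * c + a 8 * c) * s^2
   + TT t a * s^3"
  by (simp add: peval_mv sum10 mv_def mons_simps mons_Suc0 TT_def power2_eq_square power3_eq_cube algebra_simps)


context wsetup begin

lemma orth_zero:
  assumes "\<forall>r\<in>S0. (\<Sum>j<7. z j * mv r (pt j)) = 0" and i: "i < 7"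
  shows "z i = 0"
proof -
  have "z i = (\<Sum>j<7. z j * (if j = i then 1 else 0))" using i by (simp add: if_distrib sum.delta cong: if_cong)
  also have "\<dots> = (\<Sum>j<7. z j * peval (lag i) (pt j))" by (intro sum.cong refl) (simp add: lag_eval)
  also have "\<dots> = (\<Sum>m<10. lag i m * (\<Sum>j<7. z j * mv m (pt j)))"
    by (simp add: peval_mv sum_distrib_left sum_distrib_right algebra_simps sum.swap[of _ "{..<7}"])
  also have "\<dots> = 0"
    using assms(1) lag_supp by (intro sum.neutral) (metis mult_eq_0_iff)
  finally show ?thesis .
qed

lemma kb7: "kb 6 7 = - coef 6 7" "kb 8 7 = - coef 8 7" "kb 9 7 = - coef 9 7"
  by (simp_all add: kb_def S0_def)

context
  assumes dg1: "coef 6 7 * coef 8 7 = 1" and dg2: "coef 8 7 = coef 9 7 * coef 6 7"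
begin

abbreviation tt where "tt \<equiv> coef 6 7"

lemma TT_ker: assumes b: "pXY_zero \<beta> b" shows "TT tt b = 0"
proof -
  have b7: "b 7 = b 6 * kb 6 7 + b 8 * kb 8 7 + b 9 * kb 9 7" by (rule kernel_span[OF b]) simp
  then have b7': "b 7 = - b 6 * coef 6 7 - b 8 * coef 8 7 - b 9 * coef 9 7" by (simp add: kb7)
  show ?thesis unfolding TT_def using b7' dg1 dg2 by algebra
qed

definition mq :: "nat \<Rightarrow> real" where "mq j = TT tt (lag j)"

lemma TT_decomp: "TT tt a = (\<Sum>j<7. peval a (pt j) * mq j)"
proof -
  have "0 = TT tt (\<lambda>m. a m - (\<Sum>j<7. peval a (pt j) * lag j m))" using TT_ker[OF ker_decomp] by simp
  also have "\<dots> = TT tt a - (\<Sum>j<7. peval a (pt j) * mq j)"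
    by (simp add: TT_def mq_def algebra_simps sum_subtractf sum_distrib_left sum_distrib_right sum.distrib)
  finally show ?thesis by simp
qed

lemma Sk: assumes "k < 10" shows "(\<Sum>j<7. mv k (pt j) * mq j) = TT tt (\<lambda>m. if m = k then 1 else 0)"
proof -
  have "peval (\<lambda>m. if m = k then 1 else 0) p = mv k p" for p
    using assms by (simp add: peval_mv delta_sum)
  then show ?thesis using TT_decomp[of "\<lambda>m. if m = k then 1 else 0"] by simp
qed


lemma line_poly: assumes r: "r < 6"
  shows "(\<Sum>j<7. mq j * (fst (pt j) - tt * snd (pt j) - c) * mv r (pt j)) = 0"
proof -
  define ix where "ix = [1,3,4,6,7,8::nat] ! r"
  define iy where "iy = [2,4,5,7,8,9::nat] ! r"
  have rc: "r = 0 \<or> r = 1 \<or> r = 2 \<or> r = 3 \<or> r = 4 \<or> r = 5" using r by arith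
  have ixy: "ix < 10" "iy < 10" using rc by (auto simp: ix_def iy_def)
  have mx: "mv ix p = fst p * mv r p" for p
    using rc by (elim disjE) (simp_all add: ix_def mv_def mons_simps mons_Suc0 power2_eq_square power3_eq_cube)
  have my: "mv iy p = snd p * mv r p" for p
    using rc by (elim disjE) (simp_all add: iy_def mv_def mons_simps mons_Suc0 power2_eq_square power3_eq_cube)
  have T: "TT tt (\<lambda>m. if m = ix then 1 else 0) - tt * TT tt (\<lambda>m. if m = iy then 1 else 0)
      - c * TT tt (\<lambda>m. if m = r then 1 else 0) = 0"
    using rc by (elim disjE) (simp_all add: ix_def iy_def TT_def power2_eq_square power3_eq_cube)
  have "(\<Sum>j<7. mq j * (fst (pt j) - tt * snd (pt j) - c) * mv r (pt j))
     = (\<Sum>j<7. mv ix (pt j) * mq j) - tt * (\<Sum>j<7. mv iy (pt j) * mq j) - c * (\<Sum>j<7. mv r (pt j) * mq j)"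
    by (simp add: mx my algebra_simps sum_subtractf sum_distrib_left sum.distrib)
  also have "\<dots> = 0" using T Sk[OF ixy(1)] Sk[OF ixy(2)] Sk[of r] r by simp
  finally show ?thesis .
qed

lemma degenerate_false: False
proof -
  have tt0: "tt \<noteq> 0" using dg1 by auto
  have S0z: "(\<Sum>j<7. mq j) = 0" using Sk[of 0] by (simp add: mv_def mons_simps TT_def)
  have S2z: "(\<Sum>j<7. snd (pt j) * mq j) = 0" using Sk[of 2] by (simp add: mv_def mons_simps TT_def)
  have S9: "(\<Sum>j<7. mv 9 (pt j) * mq j) = 1" using Sk[of 9] by (simp add: TT_def)
  have S7: "(\<Sum>j<7. mv 7 (pt j) * mq j) = tt^2" using Sk[of 7] by (simp add: TT_def)
  have Sr: "(\<Sum>j<7. mv r (pt j) * mq j) = 0" if "r < 6" for r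
    using Sk[of r] that by (simp add: TT_def)
  obtain k0 where k0: "k0 < 7" "mq k0 \<noteq> 0"
  proof (rule ccontr)
    assume "\<not> thesis"
    then have "\<forall>j<7. mq j = 0" using that by blast
    then have "(\<Sum>j<7. mv 9 (pt j) * mq j) = 0" by simp
    with S9 show False by simp
  qed
  define c where "c = fst (pt k0) - tt * snd (pt k0)"
  define nu where "nu j = mq j * (fst (pt j) - tt * snd (pt j) - c)" for j
  define sn where "sn = (\<Sum>j<7. nu j * mv 7 (pt j))"
  define z where "z j = sn * mq j - tt^2 * nu j" for j
  have "\<forall>r\<in>S0. (\<Sum>j<7. z j * mv r (pt j)) = 0"
  proof
    fix r assume "r \<in> S0"
    then have "r < 6 \<or> r = 7" by (auto simp: S0_def)
    then show "(\<Sum>j<7. z j * mv r (pt j)) = 0"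
    proof
      assume r: "r < 6"
      have "(\<Sum>j<7. z j * mv r (pt j)) = sn * (\<Sum>j<7. mv r (pt j) * mq j)
          - tt^2 * (\<Sum>j<7. mq j * (fst (pt j) - tt * snd (pt j) - c) * mv r (pt j))"
        by (simp add: z_def nu_def algebra_simps sum_subtractf sum_distrib_left sum.distrib)
      then show ?thesis using Sr[OF r] line_poly[OF r, of c] by simp
    next
      assume r: "r = 7"
      have "(\<Sum>j<7. z j * mv r (pt j)) = sn * (\<Sum>j<7. mv 7 (pt j) * mq j) - tt^2 * sn"
        by (simp add: r z_def sn_def algebra_simps sum_subtractf sum_distrib_left sum.distrib)
      then show ?thesis using S7 by simp
    qed
  qed
  then have z0: "\<And>i. i < 7 \<Longrightarrow> z i = 0" using orth_zero by blast
  have "nu k0 = 0" by (simp add: nu_def c_def)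
  then have "sn * mq k0 = 0" using z0[OF k0(1)] by (simp add: z_def)
  then have sn0: "sn = 0" using k0 by simp
  have line: "\<And>i. i < 7 \<Longrightarrow> mq i \<noteq> 0 \<Longrightarrow> fst (pt i) = tt * snd (pt i) + c"
  proof -
    fix i assume i: "i < 7" "mq i \<noteq> 0"
    have "tt^2 * nu i = 0" using z0[OF i(1)] sn0 by (simp add: z_def)
    then have "nu i = 0" using tt0 by simp
    then show "fst (pt i) = tt * snd (pt i) + c" using i by (simp add: nu_def)
  qed
  have ptl: "\<And>i. i < 7 \<Longrightarrow> mq i \<noteq> 0 \<Longrightarrow> pt i = (tt * snd (pt i) + c, snd (pt i))"
    using line by (metis prod.collapse)
  obtain k1 where k1: "k1 < 7" "k1 \<noteq> k0" "mq k1 \<noteq> 0"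
    using exists_other[of "{..<7}" k0 mq] S0z k0 by auto
  have y01: "snd (pt k0) \<noteq> snd (pt k1)"
  proof
    assume "snd (pt k0) = snd (pt k1)"
    then have "pt k0 = pt k1" using ptl[OF k0] ptl[OF k1(1,3)] by metis
    then show False using pt_inj k0(1) k1 by blast
  qed
  define f where "f j = mq j * (snd (pt j) - snd (pt k1))" for j
  have "(\<Sum>j<7. f j) = (\<Sum>j<7. snd (pt j) * mq j) - snd (pt k1) * (\<Sum>j<7. mq j)"
    by (simp add: f_def algebra_simps sum_subtractf sum_distrib_left sum.distrib)
  then have sf: "(\<Sum>j<7. f j) = 0" using S0z S2z by simp
  have "f k0 \<noteq> 0" using k0 y01 by (simp add: f_def)
  then obtain k2 where k2: "k2 < 7" "k2 \<noteq> k0" "f k2 \<noteq> 0"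
    using exists_other[of "{..<7}" k0 f] sf k0 by auto
  have mq2: "mq k2 \<noteq> 0" and y21: "snd (pt k2) \<noteq> snd (pt k1)" using k2 by (auto simp: f_def)
  have y20: "snd (pt k2) \<noteq> snd (pt k0)"
  proof
    assume "snd (pt k2) = snd (pt k0)"
    then have "pt k2 = pt k0" using ptl[OF k0] ptl[OF k2(1) mq2] by metis
    then show False using pt_inj k0(1) k2 by blast
  qed
  have allz: "peval b (tt * s + c, s) = 0" if b: "pXY_zero \<beta> b" for b s
  proof -
    have ev: "peval b (tt * snd (pt i) + c, snd (pt i)) = 0" if "i < 7" "mq i \<noteq> 0" for i
      using ker_vanish[OF b that(1)] ptl[OF that] by simp
    note e = ev[OF k0] ev[OF k1(1,3)] ev[OF k2(1) mq2]
    have TT0: "TT tt b = 0" by (rule TT_ker[OF b])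
    define E0 where "E0 = b 0 + b 1 * c + b 3 * c^2 + b 6 * c^3"
    define E1 where "E1 = b 1 * tt + b 2 + 2 * b 3 * tt * c + b 4 * c + 3 * b 6 * tt * c^2 + b 7 * c^2"
    define E2 where "E2 = b 3 * tt^2 + b 4 * tt + b 5 + 3 * b 6 * tt^2 * c + 2 * b 7 * tt * c + b 8 * c"
    have pl: "\<And>s. peval b (tt * s + c, s) = E0 + E1 * s + E2 * s^2"
      using TT0 by (simp add: peval_line E0_def E1_def E2_def)
    have p0: "E0 + E1 * snd (pt k0) + E2 * (snd (pt k0))^2 = 0" using e(1) pl by simp
    have p1: "E0 + E1 * snd (pt k1) + E2 * (snd (pt k1))^2 = 0" using e(2) pl by simp
    have p2: "E0 + E1 * snd (pt k2) + E2 * (snd (pt k2))^2 = 0" using e(3) pl by simp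
    have q: "E0 = 0 \<and> E1 = 0 \<and> E2 = 0"
      using quad_zero[OF p0 p1 p2 y01 not_sym[OF y20] not_sym[OF y21]] .
    show ?thesis using pl q by simp
  qed
  have "range (\<lambda>s::real. (tt * s + c, s)) \<subseteq> variety \<beta>"
    unfolding variety_eq using allz kb6 kb8 kb9 by auto
  moreover have "inj (\<lambda>s::real. (tt * s + c, s))" by (auto intro: injI)
  ultimately have "finite (UNIV :: real set)"
    using finV by (metis finite_imageD finite_subset)
  then show False using infinite_UNIV_char_0 by blast
qed

end
end


theorem theorem4p3:
  fixes \<beta> :: "nat \<Rightarrow> nat \<Rightarrow> real"
  assumes "psd 10 (M3 \<beta>)"
    and "pd 6 (M2 \<beta>)"
    and "mrank 10 (M3 \<beta>) = 7"
    and "finite (variety \<beta>)" and "card (variety \<beta>) = 7"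
    and "cols_basis 10 (M3 \<beta>) {0, 1, 2, 3, 4, 5, 7}"
  shows "has_rep_measure \<beta> \<longleftrightarrow> weakly_consistent \<beta>"
proof -
  interpret bsetup \<beta> using assms(6) by unfold_locales (simp add: S0_def)
  show ?thesis
  proof
    assume "has_rep_measure \<beta>" then show "weakly_consistent \<beta>" by (rule rep_imp_wc)
  next
    assume wc: "weakly_consistent \<beta>"
    interpret wsetup \<beta> using wc assms(4,5) by unfold_locales
    show "has_rep_measure \<beta>"
    proof (cases "coef 6 7 * coef 8 7 = 1 \<and> coef 8 7 = coef 9 7 * coef 6 7")
      case True then show ?thesis using degenerate_false by blast
    next
      case False then show ?thesis using rep assms(1) by blast
    qed
  qed
qed

end
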